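(* Let $\mathbb{K}$ be a field, $X$ a set and $\alpha=(\{D_t\}_{t\in G},\{\alpha_t\}_{t\in G})$ a partial action of a group $G$ on the algebra $\mathcal{F}_0(X)$. Then there exists a partial action $\theta=(\{X_t\}_{t\in G},\{h_t\}_{t\in G})$ of $G$ on $X$ such that $D_t=\mathcal{F}_0(X_t)$ and $\alpha_t(f)=f\circ h_{t^{-1}}$ for all $t\in G$ and $f\in D_{t^{-1}}$ (i.e. $\alpha$ arises from $\theta$).
   Context: $\mathcal{F}_0(X)$ is the $\mathbb{K}$-algebra of finitely supported functions $X\to\mathbb{K}$ with pointwise operations, and for $A\subseteq X$, $\mathcal{F}_0(A)=\{f\in\mathcal{F}_0(X):f(x)=0\ \forall x\notin A\}$. A partial action of $G$ on a set $X$ is a pair $(\{X_t\},\{h_t\})$ with $X_t\subseteq X$, bijections $h_t:X_{t^{-1}}\to X_t$, $X_e=X$, $h_e=\mathrm{id}$, $h_t(X_{t^{-1}}\cap X_s)=X_t\cap X_{ts}$, $h_t(h_s(x))=h_{ts}(x)$ for $x\in X_{s^{-1}}\cap X_{s^{-1}t^{-1}}$. A partial action of $G$ on an algebra $A$ is a pair $(\{D_t\},\{\alpha_t\})$ with $D_t$ two-sided ideals, $\alpha_t:D_{t^{-1}}\to D_t$ algebra isomorphisms, $D_e=A$, $\alpha_e=\mathrm{id}$, $\alpha_t(D_{t^{-1}}\cap D_s)=D_t\cap D_{ts}$, $\alpha_t\alpha_s=\alpha_{ts}$ on $D_{s^{-1}}\cap D_{s^{-1}t^{-1}}$. *)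

theory Defs
  imports "HOL-Algebra.Group"
begin

text \<open>F_0(X): finitely supported functions X -> K, represented as functions on the
ambient type vanishing outside X.\<close>
definition F0 :: "'x set \<Rightarrow> ('x \<Rightarrow> 'k::field) set" where
  "F0 X = {f. finite {x. f x \<noteq> 0} \<and> (\<forall>x. x \<notin> X \<longrightarrow> f x = 0)}"

text \<open>For A \<subseteq> X this is F_0(A) = {f \<in> F_0(X). f vanishes outside A}.\<close>

definition alg_ideal :: "'x set \<Rightarrow> ('x \<Rightarrow> 'k::field) set \<Rightarrow> bool" where
  "alg_ideal X I \<longleftrightarrow> I \<subseteq> F0 X \<and> (\<lambda>x. 0) \<in> I
     \<and> (\<forall>f\<in>I. \<forall>g\<in>I. (\<lambda>x. f x + g x) \<in> I)
     \<and> (\<forall>c. \<forall>f\<in>I. (\<lambda>x. c * f x) \<in> I)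
     \<and> (\<forall>a\<in>F0 X. \<forall>f\<in>I. (\<lambda>x. a x * f x) \<in> I \<and> (\<lambda>x. f x * a x) \<in> I)"

definition alg_iso :: "(('x \<Rightarrow> 'k::field) \<Rightarrow> ('x \<Rightarrow> 'k)) \<Rightarrow> ('x \<Rightarrow> 'k) set \<Rightarrow> ('x \<Rightarrow> 'k) set \<Rightarrow> bool" where
  "alg_iso \<phi> I J \<longleftrightarrow> bij_betw \<phi> I J
     \<and> (\<forall>f\<in>I. \<forall>g\<in>I. \<phi> (\<lambda>x. f x + g x) = (\<lambda>x. \<phi> f x + \<phi> g x))
     \<and> (\<forall>f\<in>I. \<forall>g\<in>I. \<phi> (\<lambda>x. f x * g x) = (\<lambda>x. \<phi> f x * \<phi> g x))
     \<and> (\<forall>c. \<forall>f\<in>I. \<phi> (\<lambda>x. c * f x) = (\<lambda>x. c * \<phi> f x))"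

definition partial_action_alg ::
  "('g, 'm) monoid_scheme \<Rightarrow> 'x set \<Rightarrow> ('g \<Rightarrow> ('x \<Rightarrow> 'k::field) set)
     \<Rightarrow> ('g \<Rightarrow> ('x \<Rightarrow> 'k) \<Rightarrow> ('x \<Rightarrow> 'k)) \<Rightarrow> bool" where
  "partial_action_alg G X D \<alpha> \<longleftrightarrow>
     (\<forall>t\<in>carrier G. alg_ideal X (D t))
   \<and> (\<forall>t\<in>carrier G. alg_iso (\<alpha> t) (D (inv\<^bsub>G\<^esub> t)) (D t))
   \<and> D \<one>\<^bsub>G\<^esub> = F0 X
   \<and> (\<forall>f\<in>F0 X. \<alpha> \<one>\<^bsub>G\<^esub> f = f)
   \<and> (\<forall>t\<in>carrier G. \<forall>s\<in>carrier G.
        \<alpha> t ` (D (inv\<^bsub>G\<^esub> t) \<inter> D s) = D t \<inter> D (t \<otimes>\<^bsub>G\<^esub> s))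
   \<and> (\<forall>t\<in>carrier G. \<forall>s\<in>carrier G.
        \<forall>f\<in>D (inv\<^bsub>G\<^esub> s) \<inter> D (inv\<^bsub>G\<^esub> s \<otimes>\<^bsub>G\<^esub> inv\<^bsub>G\<^esub> t).
          \<alpha> t (\<alpha> s f) = \<alpha> (t \<otimes>\<^bsub>G\<^esub> s) f)"

definition partial_action_set ::
  "('g, 'm) monoid_scheme \<Rightarrow> 'x set \<Rightarrow> ('g \<Rightarrow> 'x set) \<Rightarrow> ('g \<Rightarrow> 'x \<Rightarrow> 'x) \<Rightarrow> bool" where
  "partial_action_set G X Xs h \<longleftrightarrow>
     (\<forall>t\<in>carrier G. Xs t \<subseteq> X)
   \<and> (\<forall>t\<in>carrier G. bij_betw (h t) (Xs (inv\<^bsub>G\<^esub> t)) (Xs t))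
   \<and> Xs \<one>\<^bsub>G\<^esub> = X
   \<and> (\<forall>x\<in>X. h \<one>\<^bsub>G\<^esub> x = x)
   \<and> (\<forall>t\<in>carrier G. \<forall>s\<in>carrier G.
        h t ` (Xs (inv\<^bsub>G\<^esub> t) \<inter> Xs s) = Xs t \<inter> Xs (t \<otimes>\<^bsub>G\<^esub> s))
   \<and> (\<forall>t\<in>carrier G. \<forall>s\<in>carrier G.
        \<forall>x\<in>Xs (inv\<^bsub>G\<^esub> s) \<inter> Xs (inv\<^bsub>G\<^esub> s \<otimes>\<^bsub>G\<^esub> inv\<^bsub>G\<^esub> t).
          h t (h s x) = h (t \<otimes>\<^bsub>G\<^esub> s) x)"

end

theory Submission
  imports Defs
begin

definition dlt :: "'x \<Rightarrow> 'x \<Rightarrow> 'k::field" where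
  "dlt a = (\<lambda>z. if z = a then 1 else 0)"

lemma dlt_inj: "dlt a = (dlt b :: 'x \<Rightarrow> 'k::field) \<Longrightarrow> a = b"
  unfolding dlt_def by (metis one_neq_zero)

lemma dlt_F0: "a \<in> X \<Longrightarrow> (dlt a :: 'x \<Rightarrow> 'k::field) \<in> F0 X"
proof -
  assume "a \<in> X"
  have "{x. (dlt a :: 'x \<Rightarrow> 'k) x \<noteq> 0} = {a}" by (auto simp: dlt_def)
  thus ?thesis using \<open>a \<in> X\<close> unfolding F0_def by (auto simp: dlt_def)
qed

lemma ideal_F0: "alg_ideal X I \<Longrightarrow> f \<in> I \<Longrightarrow> f \<in> F0 X"
  unfolding alg_ideal_def by blast

lemma ideal_zero: "alg_ideal X I \<Longrightarrow> (\<lambda>x. 0) \<in> I"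
  unfolding alg_ideal_def by blast

lemma ideal_add: assumes "alg_ideal X I" "f \<in> I" "g \<in> I" shows "(\<lambda>x. f x + g x) \<in> I"
proof -
  have "\<forall>f\<in>I. \<forall>g\<in>I. (\<lambda>x. f x + g x) \<in> I" using assms(1) unfolding alg_ideal_def by (elim conjE)
  from this[rule_format, OF assms(2,3)] show ?thesis .
qed

lemma ideal_smult: assumes "alg_ideal X I" "f \<in> I" shows "(\<lambda>x. c * f x) \<in> I"
proof -
  have "\<forall>c. \<forall>f\<in>I. (\<lambda>x. c * f x) \<in> I" using assms(1) unfolding alg_ideal_def by (elim conjE)
  from this[rule_format, OF assms(2)] show ?thesis .
qed

lemma ideal_mult: assumes "alg_ideal X I" "a \<in> F0 X" "f \<in> I"
  shows "(\<lambda>x. a x * f x) \<in> I \<and> (\<lambda>x. f x * a x) \<in> I"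
proof -
  have "\<forall>a\<in>F0 X. \<forall>f\<in>I. (\<lambda>x. a x * f x) \<in> I \<and> (\<lambda>x. f x * a x) \<in> I"
    using assms(1) unfolding alg_ideal_def by (elim conjE)
  from this[rule_format, OF assms(2,3)] show ?thesis .
qed

lemmas ideal_lmult = ideal_mult[THEN conjunct1]
lemmas ideal_rmult = ideal_mult[THEN conjunct2]

lemma iso_bij: "alg_iso \<phi> I J \<Longrightarrow> bij_betw \<phi> I J"
  unfolding alg_iso_def by (elim conjE)

lemma iso_mult: assumes "alg_iso \<phi> I J" "f \<in> I" "g \<in> I"
  shows "\<phi> (\<lambda>x. f x * g x) = (\<lambda>x. \<phi> f x * \<phi> g x)"
proof -
  have "\<forall>f\<in>I. \<forall>g\<in>I. \<phi> (\<lambda>x. f x * g x) = (\<lambda>x. \<phi> f x * \<phi> g x)"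
    using assms(1) unfolding alg_iso_def by (elim conjE)
  from this[rule_format, OF assms(2,3)] show ?thesis .
qed

lemma iso_smult: assumes "alg_iso \<phi> I J" "f \<in> I"
  shows "\<phi> (\<lambda>x. c * f x) = (\<lambda>x. c * \<phi> f x)"
proof -
  have "\<forall>c. \<forall>f\<in>I. \<phi> (\<lambda>x. c * f x) = (\<lambda>x. c * \<phi> f x)"
    using assms(1) unfolding alg_iso_def by (elim conjE)
  from this[rule_format, OF assms(2)] show ?thesis .
qed

lemma L1:
  assumes I: "alg_ideal X I" and f: "f \<in> I" and fx: "f x \<noteq> (0::'k::field)"
  shows "x \<in> X \<and> dlt x \<in> I"
proof -
  have "f \<in> F0 X" by (rule ideal_F0[OF I f])
  hence xX: "x \<in> X" using fx unfolding F0_def by auto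
  have "(\<lambda>z. dlt x z * f z) \<in> I" by (rule ideal_lmult[OF I dlt_F0[OF xX] f])
  hence "(\<lambda>z. inverse (f x) * (dlt x z * f z)) \<in> I" by (rule ideal_smult[OF I])
  moreover have "(\<lambda>z. inverse (f x) * (dlt x z * f z)) = dlt x"
    using fx by (auto simp: dlt_def)
  ultimately show ?thesis using xX by simp
qed

lemma L2:
  assumes I: "alg_ideal X I"
  shows "I = {f \<in> F0 X. \<forall>x. x \<notin> {x \<in> X. (dlt x :: 'x \<Rightarrow> 'k::field) \<in> I} \<longrightarrow> f x = 0}"
proof
  show "I \<subseteq> {f \<in> F0 X. \<forall>x. x \<notin> {x \<in> X. (dlt x :: 'x \<Rightarrow> 'k::field) \<in> I} \<longrightarrow> f x = 0}"
    using ideal_F0[OF I] L1[OF I] by blast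
next
  let ?A = "{x \<in> X. (dlt x :: 'x \<Rightarrow> 'k::field) \<in> I}"
  have main: "finite S \<Longrightarrow> \<forall>g. {x. g x \<noteq> 0} \<subseteq> S \<and> (\<forall>x. x \<notin> ?A \<longrightarrow> g x = 0) \<longrightarrow> g \<in> I" for S
  proof (induction S rule: finite_induct)
    case empty
    show ?case
    proof (intro allI impI)
      fix g :: "'x \<Rightarrow> 'k" assume "{x. g x \<noteq> 0} \<subseteq> {} \<and> (\<forall>x. x \<notin> ?A \<longrightarrow> g x = 0)"
      hence "g = (\<lambda>x. 0)" by auto
      thus "g \<in> I" using ideal_zero[OF I] by simp
    qed
  next
    case (insert a S)
    show ?case
    proof (intro allI impI)
      fix g :: "'x \<Rightarrow> 'k" assume g: "{x. g x \<noteq> 0} \<subseteq> insert a S \<and> (\<forall>x. x \<notin> ?A \<longrightarrow> g x = 0)"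
      let ?g' = "g(a := 0)"
      have s1: "{x. ?g' x \<noteq> 0} \<subseteq> S" using g by auto
      have s2: "\<forall>x. x \<notin> ?A \<longrightarrow> ?g' x = 0" using g by simp
      have "?g' \<in> I" using insert.IH[rule_format, of ?g'] s1 s2 by blast
      show "g \<in> I"
      proof (cases "g a = 0")
        case True
        hence "g = ?g'" by auto
        thus ?thesis using \<open>?g' \<in> I\<close> by simp
      next
        case False
        hence "dlt a \<in> I" using g by auto
        hence "(\<lambda>z. g a * dlt a z) \<in> I" by (rule ideal_smult[OF I])
        hence "(\<lambda>z. ?g' z + g a * dlt a z) \<in> I" by (rule ideal_add[OF I \<open>?g' \<in> I\<close>])
        moreover have "(\<lambda>z. ?g' z + g a * dlt a z) = g" by (auto simp: dlt_def)
        ultimately show ?thesis by simp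
      qed
    qed
  qed
  show "{f \<in> F0 X. \<forall>x. x \<notin> ?A \<longrightarrow> f x = 0} \<subseteq> I"
  proof
    fix f :: "'x \<Rightarrow> 'k" assume f: "f \<in> {f \<in> F0 X. \<forall>x. x \<notin> ?A \<longrightarrow> f x = 0}"
    hence "finite {x. f x \<noteq> 0}" unfolding F0_def by auto
    from main[OF this, rule_format, of f] f show "f \<in> I" by blast
  qed
qed

lemma L3:
  assumes "alg_iso \<phi> I J" "(\<lambda>x. 0) \<in> I"
  shows "\<phi> (\<lambda>x. 0) = (\<lambda>x. (0::'k::field))"
proof -
  have "\<forall>c. \<forall>f\<in>I. \<phi> (\<lambda>x. c * f x) = (\<lambda>x. c * \<phi> f x)"
    using assms(1) unfolding alg_iso_def by (elim conjE)
  from this[rule_format, of "\<lambda>x. 0" 0] assms(2) show ?thesis by simp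
qed

lemma L4:
  assumes I: "alg_ideal X I" and J: "alg_ideal X J" and phi: "alg_iso \<phi> I J"
    and dx: "dlt x \<in> I"
  shows "\<exists>y. y \<in> X \<and> dlt y \<in> J \<and> \<phi> (dlt x) = (dlt y :: 'x \<Rightarrow> 'k::field)"
proof -
  let ?e = "\<phi> (dlt x)"
  have bij: "bij_betw \<phi> I J" by (rule iso_bij[OF phi])
  have inj: "inj_on \<phi> I" using bij unfolding bij_betw_def by blast
  have mul: "\<And>f g. f \<in> I \<Longrightarrow> g \<in> I \<Longrightarrow> \<phi> (\<lambda>x. f x * g x) = (\<lambda>x. \<phi> f x * \<phi> g x)"
    by (rule iso_mult[OF phi])
  have scal: "\<And>c f. f \<in> I \<Longrightarrow> \<phi> (\<lambda>x. c * f x) = (\<lambda>x. c * \<phi> f x)"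
    by (rule iso_smult[OF phi])
  have z: "(\<lambda>x. 0) \<in> I" by (rule ideal_zero[OF I])
  have phi0: "\<phi> (\<lambda>x. 0) = (\<lambda>x. 0)" using L3[OF phi z] .
  have dne: "dlt x \<noteq> (\<lambda>x. 0::'k)"
  proof
    assume "dlt x = (\<lambda>x. 0::'k)"
    from fun_cong[OF this, of x] show False by (simp add: dlt_def)
  qed
  have "?e \<noteq> (\<lambda>x. 0)"
  proof
    assume "?e = (\<lambda>x. 0)"
    hence "?e = \<phi> (\<lambda>x. 0)" using phi0 by simp
    hence "dlt x = (\<lambda>x. 0::'k)" using inj_onD[OF inj _ dx z] by blast
    thus False using dne by blast
  qed
  then obtain y where ey: "?e y \<noteq> 0" by auto
  have "(\<lambda>z. dlt x z * dlt x z) = (dlt x :: 'x \<Rightarrow> 'k)" by (auto simp: dlt_def)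
  hence "?e = (\<lambda>z. ?e z * ?e z)" using mul[OF dx dx] by simp
  hence "?e y = ?e y * ?e y" by (rule fun_cong)
  hence "?e y * 1 = ?e y * ?e y" by simp
  hence ey1: "?e y = 1" using ey by (metis mult_left_cancel)
  have eJ: "?e \<in> J" using bij dx unfolding bij_betw_def by blast
  from L1[OF J eJ ey] have yX: "y \<in> X" and dyJ: "dlt y \<in> J" by auto
  obtain g where g: "g \<in> I" "\<phi> g = dlt y" using bij dyJ unfolding bij_betw_def by force
  have xX: "x \<in> X" using L1[OF I dx] by (simp add: dlt_def)
  have gd: "(\<lambda>z. g z * dlt x z) \<in> I" by (rule ideal_rmult[OF I dlt_F0[OF xX] g(1)])
  have "\<phi> (\<lambda>z. g z * dlt x z) = (\<lambda>z. dlt y z * ?e z)" using mul[OF g(1) dx] g(2) by simp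
  also have "\<dots> = dlt y" using ey1 by (auto simp: dlt_def)
  also have "\<dots> = \<phi> g" using g(2) by simp
  finally have geq0: "(\<lambda>z. g z * dlt x z) = g" using inj_onD[OF inj _ gd g(1)] by blast
  have geq: "g = (\<lambda>z. g x * dlt x z)"
  proof
    fix z
    have "g z * dlt x z = g z" using fun_cong[OF geq0, of z] by simp
    thus "g z = g x * dlt x z" by (cases "z = x") (auto simp: dlt_def)
  qed
  have "dlt y = \<phi> g" using g(2) by simp
  also have "\<dots> = \<phi> (\<lambda>z. g x * dlt x z)" by (rule arg_cong[OF geq])
  also have "\<dots> = (\<lambda>z. g x * ?e z)" by (rule scal[OF dx])
  finally have dy: "dlt y = (\<lambda>z. g x * ?e z)" .
  have "dlt y y = g x * ?e y" using fun_cong[OF dy, of y] by simp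
  hence "g x = 1" using ey1 by (simp add: dlt_def)
  hence "dlt y = ?e" using dy by simp
  thus ?thesis using yX dyJ by metis
qed

lemma L5:
  assumes I: "alg_ideal X I" and phi: "alg_iso \<phi> I J"
    and dx: "dlt x \<in> I" and f: "f \<in> I" and e: "\<phi> (dlt x) = dlt y"
  shows "\<phi> f y = (f x :: 'k::field)"
proof -
  have mul: "\<phi> (\<lambda>z. f z * dlt x z) = (\<lambda>z. \<phi> f z * \<phi> (dlt x) z)"
    by (rule iso_mult[OF phi f dx])
  have scal: "\<phi> (\<lambda>z. f x * dlt x z) = (\<lambda>z. f x * \<phi> (dlt x) z)"
    by (rule iso_smult[OF phi dx])
  have "(\<lambda>z. f z * dlt x z) = (\<lambda>z. f x * dlt x z)" by (auto simp: dlt_def)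
  hence "(\<lambda>z. \<phi> f z * dlt y z) = (\<lambda>z. f x * dlt y z)" using mul scal e by simp
  hence "\<phi> f y * dlt y y = f x * dlt y y" by (rule fun_cong)
  thus ?thesis by (simp add: dlt_def)
qed

theorem mainTheorem9:
  fixes G :: "('g, 'm) monoid_scheme"
    and X :: "'x set"
    and D :: "'g \<Rightarrow> ('x \<Rightarrow> 'k::field) set"
    and \<alpha> :: "'g \<Rightarrow> ('x \<Rightarrow> 'k) \<Rightarrow> ('x \<Rightarrow> 'k)"
  assumes "group G"
    and "partial_action_alg G X D \<alpha>"
  shows "\<exists>Xs h. partial_action_set G X Xs h
     \<and> (\<forall>t\<in>carrier G. D t = {f \<in> F0 X. \<forall>x. x \<notin> Xs t \<longrightarrow> f x = 0})
     \<and> (\<forall>t\<in>carrier G. \<forall>f\<in>D (inv\<^bsub>G\<^esub> t).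
          \<alpha> t f = (\<lambda>x. if x \<in> Xs t then f (h (inv\<^bsub>G\<^esub> t) x) else 0))"
proof -
  interpret group G by fact
  have PA: "(\<forall>t\<in>carrier G. alg_ideal X (D t))
   \<and> (\<forall>t\<in>carrier G. alg_iso (\<alpha> t) (D (inv\<^bsub>G\<^esub> t)) (D t))
   \<and> D \<one>\<^bsub>G\<^esub> = F0 X
   \<and> (\<forall>f\<in>F0 X. \<alpha> \<one>\<^bsub>G\<^esub> f = f)
   \<and> (\<forall>t\<in>carrier G. \<forall>s\<in>carrier G.
        \<alpha> t ` (D (inv\<^bsub>G\<^esub> t) \<inter> D s) = D t \<inter> D (t \<otimes>\<^bsub>G\<^esub> s))
   \<and> (\<forall>t\<in>carrier G. \<forall>s\<in>carrier G.
        \<forall>f\<in>D (inv\<^bsub>G\<^esub> s) \<inter> D (inv\<^bsub>G\<^esub> s \<otimes>\<^bsub>G\<^esub> inv\<^bsub>G\<^esub> t).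
          \<alpha> t (\<alpha> s f) = \<alpha> (t \<otimes>\<^bsub>G\<^esub> s) f)"
    using assms(2) unfolding partial_action_alg_def .
  have ideal: "\<And>t. t \<in> carrier G \<Longrightarrow> alg_ideal X (D t)" using PA[THEN conjunct1] by blast
  have iso: "\<And>t. t \<in> carrier G \<Longrightarrow> alg_iso (\<alpha> t) (D (inv\<^bsub>G\<^esub> t)) (D t)"
    using PA[THEN conjunct2, THEN conjunct1] by blast
  have D1: "D \<one>\<^bsub>G\<^esub> = F0 X" using PA[THEN conjunct2, THEN conjunct2, THEN conjunct1] .
  have a1: "\<And>f. f \<in> F0 X \<Longrightarrow> \<alpha> \<one>\<^bsub>G\<^esub> f = f"
    using PA[THEN conjunct2, THEN conjunct2, THEN conjunct2, THEN conjunct1] by blast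
  have img: "\<And>t s. t \<in> carrier G \<Longrightarrow> s \<in> carrier G \<Longrightarrow>
        \<alpha> t ` (D (inv\<^bsub>G\<^esub> t) \<inter> D s) = D t \<inter> D (t \<otimes>\<^bsub>G\<^esub> s)"
    using PA[THEN conjunct2, THEN conjunct2, THEN conjunct2, THEN conjunct2, THEN conjunct1] by blast
  have comp: "\<And>t s f. t \<in> carrier G \<Longrightarrow> s \<in> carrier G \<Longrightarrow>
        f \<in> D (inv\<^bsub>G\<^esub> s) \<inter> D (inv\<^bsub>G\<^esub> s \<otimes>\<^bsub>G\<^esub> inv\<^bsub>G\<^esub> t) \<Longrightarrow> \<alpha> t (\<alpha> s f) = \<alpha> (t \<otimes>\<^bsub>G\<^esub> s) f"
    using PA[THEN conjunct2, THEN conjunct2, THEN conjunct2, THEN conjunct2, THEN conjunct2] by blast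
  define Xs where "Xs t = {x \<in> X. (dlt x :: 'x \<Rightarrow> 'k) \<in> D t}" for t
  define h where "h t x = (SOME y. \<alpha> t (dlt x) = (dlt y :: 'x \<Rightarrow> 'k))" for t x
  have Dchar: "\<And>t. t \<in> carrier G \<Longrightarrow> D t = {f \<in> F0 X. \<forall>x. x \<notin> Xs t \<longrightarrow> f x = 0}"
    unfolding Xs_def using L2 ideal by blast
  have H1: "h t x \<in> Xs t \<and> \<alpha> t (dlt x) = dlt (h t x)"
    if t: "t \<in> carrier G" and x: "x \<in> Xs (inv\<^bsub>G\<^esub> t)" for t x
  proof -
    have xD: "dlt x \<in> D (inv\<^bsub>G\<^esub> t)" using x unfolding Xs_def by blast
    from L4[OF ideal[OF inv_closed[OF t]] ideal[OF t] iso[OF t] xD]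
    obtain y where y: "y \<in> X" "dlt y \<in> D t" "\<alpha> t (dlt x) = dlt y"
      by blast
    have "\<alpha> t (dlt x) = dlt (h t x)" unfolding h_def using someI[of "\<lambda>y. \<alpha> t (dlt x) = dlt y", OF y(3)] .
    hence "h t x = y" using y(3) dlt_inj by metis
    thus ?thesis using y unfolding Xs_def by auto
  qed
  have Xsub: "\<And>t. t \<in> carrier G \<Longrightarrow> Xs t \<subseteq> X" unfolding Xs_def by auto
  have H2: "\<alpha> (inv\<^bsub>G\<^esub> t) (\<alpha> t f) = f" if t: "t \<in> carrier G" and f: "f \<in> D (inv\<^bsub>G\<^esub> t)" for t f
  proof -
    have "f \<in> F0 X" by (rule ideal_F0[OF ideal[OF inv_closed[OF t]] f])
    hence "f \<in> D (inv\<^bsub>G\<^esub> t) \<inter> D (inv\<^bsub>G\<^esub> t \<otimes>\<^bsub>G\<^esub> inv\<^bsub>G\<^esub> (inv\<^bsub>G\<^esub> t))" using f D1 inv_inv[OF t] l_inv[OF t] by simp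
    hence "\<alpha> (inv\<^bsub>G\<^esub> t) (\<alpha> t f) = \<alpha> (inv\<^bsub>G\<^esub> t \<otimes>\<^bsub>G\<^esub> t) f" by (rule comp[OF inv_closed[OF t] t])
    thus ?thesis using l_inv[OF t] a1 \<open>f \<in> F0 X\<close> by simp
  qed
  have H3: "h (inv\<^bsub>G\<^esub> t) (h t x) = x" if t: "t \<in> carrier G" and x: "x \<in> Xs (inv\<^bsub>G\<^esub> t)" for t x
  proof -
    have a: "h t x \<in> Xs t" "\<alpha> t (dlt x) = dlt (h t x)" using H1[OF t x] by auto
    have "h t x \<in> Xs (inv\<^bsub>G\<^esub> (inv\<^bsub>G\<^esub> t))" using a(1) inv_inv[OF t] by simp
    from H1[OF inv_closed[OF t] this]
    have "\<alpha> (inv\<^bsub>G\<^esub> t) (dlt (h t x)) = dlt (h (inv\<^bsub>G\<^esub> t) (h t x))" by simp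
    moreover have "dlt x \<in> D (inv\<^bsub>G\<^esub> t)" using x unfolding Xs_def by auto
    moreover note H2[OF t this]
    ultimately have "dlt x = (dlt (h (inv\<^bsub>G\<^esub> t) (h t x)) :: 'x \<Rightarrow> 'k)" using a(2) by simp
    thus ?thesis by (rule dlt_inj[symmetric])
  qed
  have H3': "h t (h (inv\<^bsub>G\<^esub> t) y) = y" if t: "t \<in> carrier G" and y: "y \<in> Xs t" for t y
  proof -
    have "y \<in> Xs (inv\<^bsub>G\<^esub> (inv\<^bsub>G\<^esub> t))" using y inv_inv[OF t] by simp
    from H3[OF inv_closed[OF t] this] show ?thesis unfolding inv_inv[OF t] .
  qed
  have H1': "h (inv\<^bsub>G\<^esub> t) y \<in> Xs (inv\<^bsub>G\<^esub> t)" if t: "t \<in> carrier G" and y: "y \<in> Xs t" for t y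
  proof -
    have "y \<in> Xs (inv\<^bsub>G\<^esub> (inv\<^bsub>G\<^esub> t))" using y inv_inv[OF t] by simp
    from H1[OF inv_closed[OF t] this] show ?thesis by blast
  qed
  have bij: "bij_betw (h t) (Xs (inv\<^bsub>G\<^esub> t)) (Xs t)" if t: "t \<in> carrier G" for t
  proof (rule bij_betw_byWitness[where f'="h (inv\<^bsub>G\<^esub> t)"])
    show "\<forall>x\<in>Xs (inv\<^bsub>G\<^esub> t). h (inv\<^bsub>G\<^esub> t) (h t x) = x" using H3[OF t] by blast
    show "\<forall>y\<in>Xs t. h t (h (inv\<^bsub>G\<^esub> t) y) = y" using H3'[OF t] by blast
    show "h t ` Xs (inv\<^bsub>G\<^esub> t) \<subseteq> Xs t" using H1[OF t] by blast
    show "h (inv\<^bsub>G\<^esub> t) ` Xs t \<subseteq> Xs (inv\<^bsub>G\<^esub> t)" using H1'[OF t] by blast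
  qed
  have X1: "Xs \<one>\<^bsub>G\<^esub> = X"
  proof
    show "Xs \<one>\<^bsub>G\<^esub> \<subseteq> X" unfolding Xs_def by blast
    show "X \<subseteq> Xs \<one>\<^bsub>G\<^esub>"
    proof
      fix x assume "x \<in> X"
      hence "(dlt x :: 'x \<Rightarrow> 'k) \<in> D \<one>\<^bsub>G\<^esub>" using D1 dlt_F0 by simp
      thus "x \<in> Xs \<one>\<^bsub>G\<^esub>" unfolding Xs_def using \<open>x \<in> X\<close> by blast
    qed
  qed
  have h1: "h \<one>\<^bsub>G\<^esub> x = x" if "x \<in> X" for x
  proof -
    have "x \<in> Xs (inv\<^bsub>G\<^esub> \<one>\<^bsub>G\<^esub>)" using X1 that by simp
    from H1[OF one_closed this] have "\<alpha> \<one>\<^bsub>G\<^esub> (dlt x) = dlt (h \<one>\<^bsub>G\<^esub> x)" by simp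
    moreover have "\<alpha> \<one>\<^bsub>G\<^esub> (dlt x) = dlt x" using a1 dlt_F0[OF that] by blast
    ultimately have "dlt x = (dlt (h \<one>\<^bsub>G\<^esub> x) :: 'x \<Rightarrow> 'k)" by simp
    thus ?thesis by (rule dlt_inj[symmetric])
  qed
  have image: "h t ` (Xs (inv\<^bsub>G\<^esub> t) \<inter> Xs s) = Xs t \<inter> Xs (t \<otimes>\<^bsub>G\<^esub> s)"
    if t: "t \<in> carrier G" and s: "s \<in> carrier G" for t s
  proof
    show "h t ` (Xs (inv\<^bsub>G\<^esub> t) \<inter> Xs s) \<subseteq> Xs t \<inter> Xs (t \<otimes>\<^bsub>G\<^esub> s)"
    proof
      fix y assume "y \<in> h t ` (Xs (inv\<^bsub>G\<^esub> t) \<inter> Xs s)"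
      then obtain x where x: "x \<in> Xs (inv\<^bsub>G\<^esub> t)" "x \<in> Xs s" "y = h t x" by auto
      have "dlt x \<in> D (inv\<^bsub>G\<^esub> t) \<inter> D s" using x unfolding Xs_def by auto
      hence "\<alpha> t (dlt x) \<in> D t \<inter> D (t \<otimes>\<^bsub>G\<^esub> s)" using img[OF t s] by blast
      thus "y \<in> Xs t \<inter> Xs (t \<otimes>\<^bsub>G\<^esub> s)" using H1[OF t x(1)] x(3) unfolding Xs_def by auto
    qed
  next
    show "Xs t \<inter> Xs (t \<otimes>\<^bsub>G\<^esub> s) \<subseteq> h t ` (Xs (inv\<^bsub>G\<^esub> t) \<inter> Xs s)"
    proof
      fix y assume y: "y \<in> Xs t \<inter> Xs (t \<otimes>\<^bsub>G\<^esub> s)"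
      hence "dlt y \<in> D t \<inter> D (t \<otimes>\<^bsub>G\<^esub> s)" unfolding Xs_def by auto
      then obtain f where f: "f \<in> D (inv\<^bsub>G\<^esub> t) \<inter> D s" "\<alpha> t f = dlt y" using img[OF t s] by force
      define x where "x = h (inv\<^bsub>G\<^esub> t) y"
      have x: "x \<in> Xs (inv\<^bsub>G\<^esub> t)" "h t x = y" using H1' H3' t y unfolding x_def by auto
      have "\<alpha> t (dlt x) = dlt y" using H1[OF t x(1)] x(2) by simp
      moreover have "dlt x \<in> D (inv\<^bsub>G\<^esub> t)" using x unfolding Xs_def by auto
      moreover have "inj_on (\<alpha> t) (D (inv\<^bsub>G\<^esub> t))" using iso_bij[OF iso[OF t]] unfolding bij_betw_def by blast
      ultimately have "f = dlt x" using f inj_onD by (metis IntD1)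
      hence "x \<in> Xs s" using f(1) x(1) unfolding Xs_def by auto
      thus "y \<in> h t ` (Xs (inv\<^bsub>G\<^esub> t) \<inter> Xs s)" using x by force
    qed
  qed
  have compo: "h t (h s x) = h (t \<otimes>\<^bsub>G\<^esub> s) x"
    if t: "t \<in> carrier G" and s: "s \<in> carrier G" and x: "x \<in> Xs (inv\<^bsub>G\<^esub> s) \<inter> Xs (inv\<^bsub>G\<^esub> s \<otimes>\<^bsub>G\<^esub> inv\<^bsub>G\<^esub> t)" for t s x
  proof -
    have dx: "dlt x \<in> D (inv\<^bsub>G\<^esub> s) \<inter> D (inv\<^bsub>G\<^esub> s \<otimes>\<^bsub>G\<^esub> inv\<^bsub>G\<^esub> t)" using x unfolding Xs_def by auto
    have e1: "\<alpha> t (\<alpha> s (dlt x)) = \<alpha> (t \<otimes>\<^bsub>G\<^esub> s) (dlt x)" using comp[OF t s dx] .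
    have hs: "\<alpha> s (dlt x) = dlt (h s x)" using H1[OF s] x by blast
    have "h s x \<in> Xs s \<inter> Xs (s \<otimes>\<^bsub>G\<^esub> (inv\<^bsub>G\<^esub> s \<otimes>\<^bsub>G\<^esub> inv\<^bsub>G\<^esub> t))"
      using image[OF s m_closed[OF inv_closed[OF s] inv_closed[OF t]]] x by blast
    moreover have "s \<otimes>\<^bsub>G\<^esub> (inv\<^bsub>G\<^esub> s \<otimes>\<^bsub>G\<^esub> inv\<^bsub>G\<^esub> t) = inv\<^bsub>G\<^esub> t"
      using s t by (simp add: m_assoc[symmetric] r_inv)
    ultimately have "h s x \<in> Xs (inv\<^bsub>G\<^esub> t)" by simp
    hence ht: "\<alpha> t (dlt (h s x)) = dlt (h t (h s x))" using H1[OF t] by blast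
    have "x \<in> Xs (inv\<^bsub>G\<^esub> (t \<otimes>\<^bsub>G\<^esub> s))" using x inv_mult_group[OF t s] by simp
    hence hts: "\<alpha> (t \<otimes>\<^bsub>G\<^esub> s) (dlt x) = dlt (h (t \<otimes>\<^bsub>G\<^esub> s) x)" using H1[OF m_closed[OF t s]] by blast
    have "dlt (h t (h s x)) = (dlt (h (t \<otimes>\<^bsub>G\<^esub> s) x) :: 'x \<Rightarrow> 'k)" using e1 hs ht hts by simp
    thus ?thesis by (rule dlt_inj)
  qed
  have PS: "partial_action_set G X Xs h"
  proof -
    have c1: "\<forall>t\<in>carrier G. Xs t \<subseteq> X" using Xsub by blast
    have c2: "\<forall>t\<in>carrier G. bij_betw (h t) (Xs (inv\<^bsub>G\<^esub> t)) (Xs t)" using bij by blast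
    have c4: "\<forall>x\<in>X. h \<one>\<^bsub>G\<^esub> x = x" using h1 by blast
    have c5: "\<forall>t\<in>carrier G. \<forall>s\<in>carrier G.
        h t ` (Xs (inv\<^bsub>G\<^esub> t) \<inter> Xs s) = Xs t \<inter> Xs (t \<otimes>\<^bsub>G\<^esub> s)" using image by blast
    have c6: "\<forall>t\<in>carrier G. \<forall>s\<in>carrier G.
        \<forall>x\<in>Xs (inv\<^bsub>G\<^esub> s) \<inter> Xs (inv\<^bsub>G\<^esub> s \<otimes>\<^bsub>G\<^esub> inv\<^bsub>G\<^esub> t).
          h t (h s x) = h (t \<otimes>\<^bsub>G\<^esub> s) x" using compo by blast
    show ?thesis unfolding partial_action_set_def by (intro conjI c1 c2 X1 c4 c5 c6)
  qed
  have third: "\<alpha> t f = (\<lambda>x. if x \<in> Xs t then f (h (inv\<^bsub>G\<^esub> t) x) else 0)"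
    if t: "t \<in> carrier G" and f: "f \<in> D (inv\<^bsub>G\<^esub> t)" for t f
  proof
    fix y
    show "\<alpha> t f y = (if y \<in> Xs t then f (h (inv\<^bsub>G\<^esub> t) y) else 0)"
    proof (cases "y \<in> Xs t")
      case True
      define x where "x = h (inv\<^bsub>G\<^esub> t) y"
      have x: "x \<in> Xs (inv\<^bsub>G\<^esub> t)" "h t x = y" using H1' H3' t True unfolding x_def by auto
      have eq: "\<alpha> t (dlt x) = dlt y" using H1[OF t x(1)] x(2) by simp
      have xD: "dlt x \<in> D (inv\<^bsub>G\<^esub> t)" using x unfolding Xs_def by auto
      have "\<alpha> t f y = f x"
        by (rule L5[OF ideal[OF inv_closed[OF t]] iso[OF t] xD f eq])
      thus ?thesis using True x_def by simp
    next
      case False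
      have "\<alpha> t f \<in> D t" using iso_bij[OF iso[OF t]] f unfolding bij_betw_def by blast
      hence "\<alpha> t f \<in> {f \<in> F0 X. \<forall>x. x \<notin> Xs t \<longrightarrow> f x = 0}" using Dchar[OF t] by simp
      hence "\<alpha> t f y = 0" using False by blast
      thus ?thesis using False by simp
    qed
  qed
  have d2: "\<forall>t\<in>carrier G. D t = {f \<in> F0 X. \<forall>x. x \<notin> Xs t \<longrightarrow> f x = 0}" using Dchar by blast
  have d3: "\<forall>t\<in>carrier G. \<forall>f\<in>D (inv\<^bsub>G\<^esub> t).
          \<alpha> t f = (\<lambda>x. if x \<in> Xs t then f (h (inv\<^bsub>G\<^esub> t) x) else 0)" using third by blast
  show ?thesis by (rule exI[of _ Xs], rule exI[of _ h], intro conjI PS d2 d3)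
qed

end
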